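(* For any nonempty rooted trees $a$ and $b$, $\Lambda(a\bowtie b)=\Lambda(a)\diamond\Lambda(b)$.
   Context: Let $k$ be a field of characteristic $0$. $\mathcal H_{CK}$ is the free commutative $k$-algebra on isomorphism classes of nonempty (non-planar, finite) rooted trees, i.e. rooted forests with unit the empty forest $\mathbf 1$; $B_+(t_1\cdots t_n)$ is the tree obtained by joining the roots of $t_1,\dots,t_n$ to a new root ($B_+(\mathbf 1)=\bullet$). $\mathcal A=k[x]$ carries the quasi-shuffle product $\diamond$, the commutative associative product determined by $\mathbf 1\diamond u=u\diamond\mathbf 1=u$ and, for $k,l\ge1$, $x^k\diamond x^l=(x^{k-1}\diamond x^l)x+(x^k\diamond x^{l-1})x+(x^{k-1}\diamond x^{l-1})x$. $\Lambda:\mathcal H_{CK}\to(\mathcal A,\diamond)$ is the unique unital algebra morphism with $\Lambda(B_+(t_1\cdots t_n))=(\Lambda(t_1)\diamond\cdots\diamond\Lambda(t_n))\,x$ for all trees (so $\Lambda(\bullet)=x$). For trees $a=B_+(a_1\cdots a_n)$ and $b=B_+(b_1\cdots b_p)$: the Butcher product is $a\circ b=B_+(a_1\cdots a_nb)$, the merging product is $a\times b=B_+(a_1\cdots a_nb_1\cdots b_p)$, and $a\bowtie b=a\circ b+b\circ a+a\times b$. *)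

theory Defs
  imports "HOL-Computational_Algebra.Polynomial" "HOL-Library.Multiset" "HOL-Library.Poly_Mapping"
begin

text \<open>Non-planar rooted trees: a root with a multiset of subtrees (so every tree is nonempty).\<close>
datatype tree = Node "tree multiset"

definition Bplus :: "tree multiset \<Rightarrow> tree" where
  "Bplus F = Node F"

fun children :: "tree \<Rightarrow> tree multiset" where
  "children (Node F) = F"

definition butcher :: "tree \<Rightarrow> tree \<Rightarrow> tree" where
  "butcher a b = Node (children a + {#b#})"

definition merging :: "tree \<Rightarrow> tree \<Rightarrow> tree" where
  "merging a b = Node (children a + children b)"

text \<open>H_CK: the free commutative algebra on trees, i.e. finitely supported
  k-linear combinations of forests (multisets of trees; the empty forest is the unit).\<close>
type_synonym 'k hck = "tree multiset \<Rightarrow>\<^sub>0 'k"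

definition tree_hck :: "tree \<Rightarrow> 'k::comm_ring_1 hck" where
  "tree_hck t = Poly_Mapping.single {#t#} 1"

definition bowtie :: "tree \<Rightarrow> tree \<Rightarrow> 'k::comm_ring_1 hck" where
  "bowtie a b = tree_hck (butcher a b) + tree_hck (butcher b a) + tree_hck (merging a b)"

fun qsh :: "nat \<Rightarrow> nat \<Rightarrow> 'k::comm_ring_1 poly" where
  "qsh 0 l = monom 1 l"
| "qsh (Suc k) 0 = monom 1 (Suc k)"
| "qsh (Suc k) (Suc l) = (qsh k (Suc l) + qsh (Suc k) l + qsh k l) * [:0, 1:]"

definition diamond :: "'k::comm_ring_1 poly \<Rightarrow> 'k poly \<Rightarrow> 'k poly" (infixl "\<diamondop>" 70) where
  "p \<diamondop> q = (\<Sum>i\<le>degree p. \<Sum>j\<le>degree q. smult (coeff p i * coeff q j) (qsh i j))"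

definition diam_mset :: "'k::comm_ring_1 poly multiset \<Rightarrow> 'k poly" where
  "diam_mset N = fold_mset diamond 1 N"

primrec Lam_tree :: "tree \<Rightarrow> 'k::comm_ring_1 poly" where
  "Lam_tree (Node F) = diam_mset (image_mset Lam_tree F) * [:0, 1:]"

definition Lam_forest :: "tree multiset \<Rightarrow> 'k::comm_ring_1 poly" where
  "Lam_forest F = diam_mset (image_mset Lam_tree F)"

definition Lam :: "'k::comm_ring_1 hck \<Rightarrow> 'k poly" where
  "Lam h = (\<Sum>F\<in>Poly_Mapping.keys h. smult (Poly_Mapping.lookup h F) (Lam_forest F))"

end

theory Submission
  imports Defs
begin

definition psi :: "'k::comm_ring_1 poly \<Rightarrow> nat \<Rightarrow> 'k" where
  "psi p N = (\<Sum>i\<le>N. coeff p i * of_nat (N choose i))"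

definition S :: "(nat \<Rightarrow> 'k::comm_ring_1) \<Rightarrow> nat \<Rightarrow> 'k" where
  "S f N = (\<Sum>n<N. f n)"

lemma psi_gen:
  assumes "\<And>i. i > M \<Longrightarrow> coeff p i * of_nat (N choose i) = 0"
  shows "psi p N = (\<Sum>i\<le>M. coeff p i * of_nat (N choose i))"
proof -
  have "psi p N = (\<Sum>i\<le>max M N. coeff p i * of_nat (N choose i))"
    unfolding psi_def by (rule sum.mono_neutral_left) (auto, metis binomial_eq_0 mult_zero_right of_nat_0 not_le)
  also have "\<dots> = (\<Sum>i\<le>M. coeff p i * of_nat (N choose i))"
    by (rule sum.mono_neutral_right) (auto intro: assms)
  finally show ?thesis .
qed

lemma psi_deg: "degree p \<le> M \<Longrightarrow> psi p N = (\<Sum>i\<le>M. coeff p i * of_nat (N choose i))"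
  by (rule psi_gen) (simp add: coeff_eq_0)

lemma psi_add: "psi (p + q) N = psi p N + psi q N"
  by (simp add: psi_def algebra_simps sum.distrib)

lemma psi_diff: "psi (p - q) N = psi p N - psi q N"
  by (simp add: psi_def algebra_simps sum_subtractf)

lemma psi_smult: "psi (smult c p) N = c * psi p N"
  by (simp add: psi_def sum_distrib_left mult.assoc)

lemma psi_zero: "psi 0 N = 0"
  by (simp add: psi_def)

lemma psi_sum: "psi (\<Sum>i\<in>A. f i) N = (\<Sum>i\<in>A. psi (f i) N)"
  by (induction A rule: infinite_finite_induct) (auto simp: psi_zero psi_add)

lemma psi_monom: "psi (monom c k) N = c * of_nat (N choose k)"
proof -
  have "psi (monom c k) N = (\<Sum>i\<le>k. coeff (monom c k) i * of_nat (N choose i))"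
    by (rule psi_deg) (simp add: degree_monom_le)
  also have "\<dots> = c * of_nat (N choose k)"
    by (simp add: coeff_monom if_distrib[where f="\<lambda>x. x * _"] cong: if_cong)
  finally show ?thesis .
qed

lemma psi_one: "psi 1 N = 1"
  by (subst psi_deg[where M=0]) auto

lemma mult_x: "(p::'k::comm_ring_1 poly) * [:0, 1:] = pCons 0 p"
  by (simp add: smult_1_left)

lemma psi_pCons_Suc: "psi (pCons 0 p) (Suc N) = psi (pCons 0 p) N + psi p N"
proof -
  have A: "psi (pCons 0 p) (Suc N) = (\<Sum>j\<le>N. coeff p j * of_nat (Suc N choose Suc j))"
    unfolding psi_def sum.atMost_Suc_shift by (simp del: sum.atMost_Suc)
  have B: "psi (pCons 0 p) N = (\<Sum>j\<le>N. coeff p j * of_nat (N choose Suc j))"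
  proof -
    have "psi (pCons 0 p) N = (\<Sum>i\<le>Suc N. coeff (pCons 0 p) i * of_nat (N choose i))"
      by (rule psi_gen) (simp add: binomial_eq_0)
    then show ?thesis unfolding sum.atMost_Suc_shift by (simp del: sum.atMost_Suc)
  qed
  show ?thesis apply (subst A, subst B) unfolding psi_def[of p N]
    by (simp add: sum.distrib[symmetric] algebra_simps)
qed

lemma psi_pCons0: "psi (pCons 0 p) N = S (psi p) N"
  unfolding S_def
  by (induction N) (simp add: psi_def S_def, simp add: psi_pCons_Suc S_def)

lemma S_cong: "(\<And>n. f n = g n) \<Longrightarrow> S f N = S g N"
  by (simp add: S_def)

lemma psi_mult_x: "psi (p * [:0, 1:]) N = S (psi p) N"
  unfolding mult_x by (rule psi_pCons0)

lemma S_prod: "S f N * S g N = S (\<lambda>n. f n * S g n + S f n * g n + f n * g n) N"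
  by (induction N) (simp_all add: S_def algebra_simps)

lemma choose_S: "(of_nat (N choose Suc k) :: 'k::comm_ring_1) = S (\<lambda>n. of_nat (n choose k)) N"
proof (cases N)
  case 0 then show ?thesis by (simp add: S_def)
next
  case (Suc M)
  have "(N choose Suc k) = (\<Sum>n\<le>M. n choose k)" using Suc sum_choose_upper by simp
  then show ?thesis using Suc by (simp add: S_def lessThan_Suc_atMost)
qed

lemma psi_qsh: "psi (qsh k l :: 'k::comm_ring_1 poly) N = of_nat (N choose k) * of_nat (N choose l)"
proof (induction k l arbitrary: N rule: qsh.induct)
  case (1 l) then show ?case by (simp add: psi_monom)
next
  case (2 k) then show ?case by (simp add: psi_monom)
next
  case (3 k l)
  have "psi (qsh (Suc k) (Suc l) :: 'k poly) N =
     S (\<lambda>n. of_nat (n choose k) * of_nat (n choose Suc l) + of_nat (n choose Suc k) * of_nat (n choose l)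
        + of_nat (n choose k) * of_nat (n choose l)) N"
    by (simp add: psi_pCons0, rule S_cong, simp add: psi_add 3)
  also have "\<dots> = S (\<lambda>n. of_nat (n choose k)) N * S (\<lambda>n. of_nat (n choose l)) N"
    by (subst S_prod) (simp add: choose_S[symmetric])
  finally show ?case by (simp add: choose_S)
qed

lemma psi_as_sum: "psi p N = (\<Sum>i\<le>degree p. coeff p i * of_nat (N choose i))"
  by (rule psi_deg) simp

lemma psi_diamond: "psi (p \<diamondop> q) N = psi p N * psi q N"
  unfolding diamond_def psi_sum psi_smult psi_qsh psi_as_sum[of p] psi_as_sum[of q] sum_product
  by (simp add: algebra_simps)

lemma psi_inj0:
  assumes "\<And>N. psi p N = 0" shows "p = 0"
proof (rule ccontr)
  assume "p \<noteq> 0"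
  then have ex: "\<exists>i. coeff p i \<noteq> 0" using leading_coeff_neq_0 by blast
  define i0 where "i0 = (LEAST i. coeff p i \<noteq> 0)"
  have c: "coeff p i0 \<noteq> 0" unfolding i0_def by (rule LeastI_ex[OF ex])
  have z: "\<And>i. i < i0 \<Longrightarrow> coeff p i = 0" unfolding i0_def using not_less_Least by blast
  have "psi p i0 = (\<Sum>i<i0. coeff p i * of_nat (i0 choose i)) + coeff p i0"
    unfolding psi_def by (simp add: lessThan_Suc_atMost[symmetric])
  also have "\<dots> = coeff p i0" by (simp add: z)
  finally show False using assms c by simp
qed

lemma psi_inj: "(\<And>N. psi p N = psi q N) \<Longrightarrow> p = q"
  using psi_inj0[of "p - q"] by (simp add: psi_diff)

lemma diamond_comm: "p \<diamondop> q = q \<diamondop> p"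
  by (rule psi_inj) (simp add: psi_diamond mult.commute)

lemma diamond_assoc: "p \<diamondop> (q \<diamondop> r) = (p \<diamondop> q) \<diamondop> r"
  by (rule psi_inj) (simp add: psi_diamond mult.assoc)

lemma diamond_one: "1 \<diamondop> p = p"
  by (rule psi_inj) (simp add: psi_diamond psi_one)

lemma cfc: "comp_fun_commute (diamond :: 'k::comm_ring_1 poly \<Rightarrow> _)"
  by unfold_locales (auto simp: fun_eq_iff intro!: psi_inj simp: psi_diamond algebra_simps)

lemma psi_diam_mset: "psi (diam_mset M) N = (\<Prod>p\<in>#M. psi p N)"
proof (induction M)
  case empty then show ?case by (simp add: diam_mset_def psi_one)
next
  case (add x M)
  then show ?case
    by (simp add: diam_mset_def comp_fun_commute.fold_mset_add_mset[OF cfc] psi_diamond)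
qed

lemma psi_Lam_tree: "psi (Lam_tree (Node F)) N = S (\<lambda>n. \<Prod>t\<in>#F. psi (Lam_tree t) n) N"
  by (simp add: psi_pCons0, rule S_cong, simp add: psi_diam_mset image_mset.compositionality o_def)

lemma Lam_superset:
  assumes "finite K" "Poly_Mapping.keys h \<subseteq> K"
  shows "Lam h = (\<Sum>F\<in>K. smult (Poly_Mapping.lookup h F) (Lam_forest F))"
  unfolding Lam_def
  by (rule sum.mono_neutral_left) (use assms in \<open>auto simp: in_keys_iff\<close>)

lemma Lam_add: "Lam (h + g) = Lam h + (Lam g :: 'k::comm_ring_1 poly)"
proof -
  have "Lam (h + g) = (\<Sum>F\<in>(Poly_Mapping.keys h \<union> Poly_Mapping.keys g). smult (Poly_Mapping.lookup (h + g) F) (Lam_forest F))"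
    by (rule Lam_superset) (auto dest: set_mp[OF keys_add])
  also have "\<dots> = (\<Sum>F\<in>(Poly_Mapping.keys h \<union> Poly_Mapping.keys g). smult (Poly_Mapping.lookup h F) (Lam_forest F)) + (\<Sum>F\<in>(Poly_Mapping.keys h \<union> Poly_Mapping.keys g). smult (Poly_Mapping.lookup g F) (Lam_forest F))"
    by (simp add: lookup_add smult_add_left sum.distrib)
  also have "\<dots> = Lam h + Lam g"
    by (subst (1 2) Lam_superset[symmetric]) auto
  finally show ?thesis .
qed

lemma Lam_tree_hck: "Lam (tree_hck t :: 'k::comm_ring_1 hck) = Lam_tree t"
proof -
  have "Lam (tree_hck t :: 'k hck) = Lam_forest {#t#}"
    by (simp add: Lam_def tree_hck_def)
  also have "\<dots> = Lam_tree t"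
    by (simp add: Lam_forest_def diam_mset_def diamond_comm[of _ 1] diamond_one)
  finally show ?thesis .
qed

theorem mainTheorem13:
  fixes a b :: tree
  shows "(Lam (bowtie a b :: 'k::field_char_0 hck)) = Lam_tree a \<diamondop> Lam_tree b"
proof (rule psi_inj)
  fix N
  obtain A where a: "a = Node A" by (cases a)
  obtain B where b: "b = Node B" by (cases b)
  define PA where "PA = (\<lambda>n. \<Prod>t\<in>#A. psi (Lam_tree t :: 'k poly) n)"
  define PB where "PB = (\<lambda>n. \<Prod>t\<in>#B. psi (Lam_tree t :: 'k poly) n)"
  have la: "\<And>n. psi (Lam_tree a :: 'k poly) n = S PA n" unfolding a PA_def by (rule psi_Lam_tree)
  have lb: "\<And>n. psi (Lam_tree b :: 'k poly) n = S PB n" unfolding b PB_def by (rule psi_Lam_tree)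
  have "psi (Lam (bowtie a b :: 'k hck)) N =
    psi (Lam_tree (butcher a b) :: 'k poly) N + psi (Lam_tree (butcher b a) :: 'k poly) N
     + psi (Lam_tree (merging a b) :: 'k poly) N"
    by (simp add: bowtie_def Lam_add Lam_tree_hck psi_add)
  also have "\<dots> = S (\<lambda>n. PA n * S PB n) N + S (\<lambda>n. PB n * S PA n) N + S (\<lambda>n. PA n * PB n) N"
    unfolding butcher_def merging_def psi_Lam_tree
    using la lb by (simp add: a b PA_def PB_def mult.commute)
  also have "\<dots> = S PA N * S PB N"
    by (subst S_prod) (simp add: S_def sum.distrib algebra_simps)
  finally show "psi (Lam (bowtie a b :: 'k hck)) N = psi (Lam_tree a \<diamondop> Lam_tree b) N"
    by (simp add: psi_diamond la lb)
qed

end
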